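(* Let $\Lambda\ge1$ and let $K_0,\dots,K_\Lambda$ be non-negative integers. For $\lambda\in\{1,\dots,\Lambda\}$ define $f_\lambda:[0,\Lambda]\to\mathbb R$ by \[ f_\lambda(t)=K_\lambda\prod_{i=0}^{\lambda-1}\frac{\Lambda-t-i}{t+\lambda-i}\quad\text{for }0\le t\le \Lambda-\lambda+1,\qquad f_\lambda(t)=0\quad\text{for }\Lambda-\lambda+1\le t\le\Lambda, \] and let $f(t)=K_0+\sum_{\lambda=1}^{\Lambda}f_\lambda(t)$. Then $f$ is convex and non-increasing on $[0,\Lambda]$, and for every integer $t\in\{0,\dots,\Lambda\}$ one has $f(t)=\sum_{\lambda=0}^{\Lambda-t}K_\lambda\binom{\Lambda}{t+\lambda}/\binom{\Lambda}{t}$. In particular the sequence $t\mapsto\sum_{\lambda=0}^{\Lambda-t}K_\lambda\binom{\Lambda}{t+\lambda}/\binom{\Lambda}{t}$, $t\in\{0,\dots,\Lambda\}$, is convex and non-increasing.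
   Context: Convention: $\binom{n}{k}=0$ if $n<0$, $k<0$ or $n<k$. The two formulas defining $f_\lambda$ agree at $t=\Lambda-\lambda+1$ (both equal $0$). *)

theory Defs
  imports "HOL-Analysis.Analysis"
begin

text \<open>The piecewise function f_lambda on [0, Lambda] (for 1 \<le> lambda \<le> Lambda).
  Both formulas agree (value 0) at t = Lambda - lambda + 1.\<close>
definition f_lam :: "nat \<Rightarrow> (nat \<Rightarrow> nat) \<Rightarrow> nat \<Rightarrow> real \<Rightarrow> real" where
  "f_lam \<Lambda> K l t =
     (if t \<le> real \<Lambda> - real l + 1
      then real (K l) * (\<Prod>i<l. (real \<Lambda> - t - real i) / (t + real l - real i))
      else 0)"

definition f_tot :: "nat \<Rightarrow> (nat \<Rightarrow> nat) \<Rightarrow> real \<Rightarrow> real" where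
  "f_tot \<Lambda> K t = real (K 0) + (\<Sum>l = 1..\<Lambda>. f_lam \<Lambda> K l t)"

text \<open>The sequence value; nat binomials vanish when the lower index exceeds the upper.\<close>
definition seqval :: "nat \<Rightarrow> (nat \<Rightarrow> nat) \<Rightarrow> nat \<Rightarrow> real" where
  "seqval \<Lambda> K t =
     (\<Sum>l = 0..\<Lambda> - t. real (K l) * real (\<Lambda> choose (t + l)) / real (\<Lambda> choose t))"

end

theory Submission
  imports Defs
begin

definition anti_on :: "real set \<Rightarrow> (real \<Rightarrow> real) \<Rightarrow> bool" where
  "anti_on I f \<longleftrightarrow> (\<forall>x\<in>I. \<forall>y\<in>I. x \<le> y \<longrightarrow> f y \<le> f x)"

lemma prod_conv:
  fixes I :: "real set"
  assumes I: "convex I" and fn: "\<forall>x\<in>I. 0 \<le> f x" and gn: "\<forall>x\<in>I. 0 \<le> g x"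
    and fa: "anti_on I f" and ga: "anti_on I g"
    and fc: "convex_on I f" and gc: "convex_on I g"
  shows "convex_on I (\<lambda>x. f x * g x)"
proof (rule convex_on_linorderI[OF _ I])
  fix t x y :: real
  assume t: "0 < t" "t < 1" and x: "x \<in> I" and y: "y \<in> I" and xy: "x < y"
  define z where "z = (1 - t) *\<^sub>R x + t *\<^sub>R y"
  have zI: "z \<in> I" using I x y t unfolding z_def convex_alt by (smt (verit) scaleR_conv_of_real) 
  have f1: "f z \<le> (1 - t) * f x + t * f y" using convex_onD[OF fc, of t x y] t x y z_def by auto
  have g1: "g z \<le> (1 - t) * g x + t * g y" using convex_onD[OF gc, of t x y] t x y z_def by auto
  have "f z * g z \<le> ((1 - t) * f x + t * f y) * ((1 - t) * g x + t * g y)"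
    using f1 g1 fn gn zI by (intro mult_mono) auto
  also have "\<dots> = (1 - t) * (f x * g x) + t * (f y * g y) - t * (1 - t) * ((f x - f y) * (g x - g y))"
    by (simp add: algebra_simps power2_eq_square)
  also have "\<dots> \<le> (1 - t) * (f x * g x) + t * (f y * g y)"
  proof -
    have "f y \<le> f x" "g y \<le> g x" using fa ga x y xy unfolding anti_on_def by auto
    then have "0 \<le> (f x - f y) * (g x - g y)" by auto
    then show ?thesis using t by (simp add: mult_nonneg_nonneg)
  qed
  finally show "f ((1 - t) *\<^sub>R x + t *\<^sub>R y) * g ((1 - t) *\<^sub>R x + t *\<^sub>R y)
      \<le> (1 - t) * (f x * g x) + t * (f y * g y)" unfolding z_def .
qed

lemma prod_good:
  fixes I :: "real set" and h :: "nat \<Rightarrow> real \<Rightarrow> real"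
  assumes I: "convex I" and "finite S"
    and H: "\<forall>i\<in>S. (\<forall>x\<in>I. 0 \<le> h i x) \<and> anti_on I (h i) \<and> convex_on I (h i)"
  shows "(\<forall>x\<in>I. 0 \<le> (\<Prod>i\<in>S. h i x)) \<and> anti_on I (\<lambda>x. \<Prod>i\<in>S. h i x)
     \<and> convex_on I (\<lambda>x. \<Prod>i\<in>S. h i x)"
  using assms(2) H
proof (induction S rule: finite_induct)
  case empty
  then show ?case using I by (simp add: anti_on_def convex_on_const)
next
  case (insert j S)
  then have IH: "(\<forall>x\<in>I. 0 \<le> (\<Prod>i\<in>S. h i x)) \<and> anti_on I (\<lambda>x. \<Prod>i\<in>S. h i x)
     \<and> convex_on I (\<lambda>x. \<Prod>i\<in>S. h i x)" by auto
  have hj: "(\<forall>x\<in>I. 0 \<le> h j x) \<and> anti_on I (h j) \<and> convex_on I (h j)" using insert by auto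
  have eq: "\<And>x. (\<Prod>i\<in>insert j S. h i x) = h j x * (\<Prod>i\<in>S. h i x)" using insert by simp
  have c: "convex_on I (\<lambda>x. h j x * (\<Prod>i\<in>S. h i x))"
    using prod_conv[OF I, of "h j" "\<lambda>x. \<Prod>i\<in>S. h i x"] IH hj by auto
  have a: "anti_on I (\<lambda>x. h j x * (\<Prod>i\<in>S. h i x))"
    using IH hj unfolding anti_on_def by (auto intro!: mult_mono)
  show ?case unfolding eq using c a IH hj by auto
qed

lemma factor_good:
  fixes A c :: real and I :: "real set"
  assumes c: "c > 0" and Ac: "A + c \<ge> 0" and I: "I \<subseteq> {0..A}" "convex I"
  shows "(\<forall>x\<in>I. 0 \<le> (A - x) / (x + c)) \<and> anti_on I (\<lambda>x. (A - x) / (x + c))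
     \<and> convex_on I (\<lambda>x. (A - x) / (x + c))"
proof -
  have eq: "\<And>x. x \<ge> 0 \<Longrightarrow> (A - x) / (x + c) = (A + c) * inverse (x + c) - 1"
    using c by (simp add: field_simps)
  have nn: "\<forall>x\<in>I. 0 \<le> (A - x) / (x + c)" using I c by (auto intro!: divide_nonneg_pos)
  have an: "anti_on I (\<lambda>x. (A - x) / (x + c))"
    unfolding anti_on_def
  proof (intro ballI impI)
    fix x y assume x: "x \<in> I" and y: "y \<in> I" and xy: "x \<le> y"
    have "(A + c) * inverse (y + c) \<le> (A + c) * inverse (x + c)"
      using Ac c x y I xy by (intro mult_left_mono le_imp_inverse_le) auto
    moreover have "x \<ge> 0" "y \<ge> 0" using x y I by auto
    ultimately show "(A - y) / (y + c) \<le> (A - x) / (x + c)" using eq by simp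
  qed
  have inv: "convex_on {0<..} (inverse :: real \<Rightarrow> real)" by (rule convex_on_inverse) auto
  have cv: "convex_on I (\<lambda>x. (A - x) / (x + c))"
  proof (rule convex_on_linorderI[OF _ I(2)])
    fix t x y :: real
    assume t: "0 < t" "t < 1" and x: "x \<in> I" and y: "y \<in> I" and xy: "x < y"
    have x0: "x \<ge> 0" "y \<ge> 0" using x y I by auto
    have z0: "(1 - t) * x + t * y \<ge> 0" using x0 t by simp
    have "inverse ((1 - t) *\<^sub>R (x + c) + t *\<^sub>R (y + c)) \<le> (1 - t) * inverse (x + c) + t * inverse (y + c)"
      using convex_onD[OF inv, of t "x + c" "y + c"] t x0 c by auto
    moreover have "(1 - t) *\<^sub>R (x + c) + t *\<^sub>R (y + c) = ((1 - t) * x + t * y) + c"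
      by (simp add: algebra_simps)
    ultimately have "(A + c) * inverse (((1 - t) * x + t * y) + c) \<le> (A + c) * ((1 - t) * inverse (x + c) + t * inverse (y + c))"
      using Ac by (intro mult_left_mono) auto
    then show "(A - ((1 - t) *\<^sub>R x + t *\<^sub>R y)) / ((1 - t) *\<^sub>R x + t *\<^sub>R y + c)
       \<le> (1 - t) * ((A - x) / (x + c)) + t * ((A - y) / (y + c))"
    proof -
      have "(1 - t) * ((A - x) / (x + c)) + t * ((A - y) / (y + c))
          = (A + c) * ((1 - t) * inverse (x + c) + t * inverse (y + c)) - 1"
        unfolding eq[OF x0(1)] eq[OF x0(2)] by (simp add: algebra_simps)
      moreover have "(A - ((1 - t) *\<^sub>R x + t *\<^sub>R y)) / ((1 - t) *\<^sub>R x + t *\<^sub>R y + c)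
          = (A + c) * inverse (((1 - t) * x + t * y) + c) - 1"
        using eq[OF z0] by simp
      ultimately show ?thesis using \<open>(A + c) * inverse (((1 - t) * x + t * y) + c) \<le> _\<close> by linarith
    qed
  qed
  show ?thesis using nn an cv by auto
qed


lemma glue:
  fixes P :: "real \<Rightarrow> real" and a b :: real
  assumes a: "0 \<le> a" "a \<le> b" and Pn: "\<forall>x\<in>{0..a}. 0 \<le> P x" and Pa: "anti_on {0..a} P"
    and Pc: "convex_on {0..a} P" and P0: "P a = 0"
  defines "F \<equiv> (\<lambda>t. if t \<le> a then P t else 0)"
  shows "(\<forall>x\<in>{0..b}. 0 \<le> F x) \<and> anti_on {0..b} F \<and> convex_on {0..b} F"
proof -
  have Fn: "\<forall>x\<in>{0..b}. 0 \<le> F x" using Pn unfolding F_def by auto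
  have Fa: "anti_on {0..b} F" unfolding anti_on_def
  proof (intro ballI impI)
    fix x y assume x: "x \<in> {0..b}" and y: "y \<in> {0..b}" and xy: "x \<le> y"
    show "F y \<le> F x"
    proof (cases "y \<le> a")
      case True then show ?thesis using Pa x y xy unfolding F_def anti_on_def by auto
    next
      case False then show ?thesis using Fn x unfolding F_def by auto
    qed
  qed
  have Fc: "convex_on {0..b} F"
  proof (rule convex_on_linorderI)
    show "convex {0..b}" by simp
    fix t x y :: real
    assume t: "0 < t" "t < 1" and x: "x \<in> {0..b}" and y: "y \<in> {0..b}" and xy: "x < y"
    define z where "z = (1 - t) * x + t * y"
    have d1: "z - x = t * (y - x)" using z_def by (simp add: algebra_simps)
    have d2: "y - z = (1 - t) * (y - x)" using z_def by (simp add: algebra_simps)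
    have e1: "0 \<le> t * (y - x)" using t xy by simp
    have e2: "0 \<le> (1 - t) * (y - x)" using t xy by simp
    have zx1: "x \<le> z" using d1 e1 by linarith
    have zx2: "z \<le> y" using d2 e2 by linarith
    note zx = zx1 zx2
    have "F z \<le> (1 - t) * F x + t * F y"
    proof (cases "y \<le> a")
      case True
      then have "P z \<le> (1 - t) * P x + t * P y"
        using convex_onD[OF Pc, of t x y] t x zx unfolding z_def by auto
      then show ?thesis using True zx unfolding F_def by auto
    next
      case ya: False
      have Fy: "F y = 0" using ya unfolding F_def by auto
      show ?thesis
      proof (cases "z < a")
        case False
        then have "F z = 0" using P0 unfolding F_def by auto
        then show ?thesis using Fy Fn x t by auto
      next
        case za: True
        define s where "s = (z - x) / (a - x)"
        have xa: "x < a" using za zx by auto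
        have s01: "0 \<le> s" "s \<le> 1" unfolding s_def using xa za zx by auto
        have "s * (a - x) = z - x" unfolding s_def using xa by simp
        then have zs: "(1 - s) * x + s * a = z" by (simp add: algebra_simps)
        have "P z \<le> (1 - s) * P x + s * P a"
          using convex_onD[OF Pc, of s x a] s01 x xa a zs by auto
        then have Pz: "P z \<le> (1 - s) * P x" using P0 by simp
        have "1 - s \<le> 1 - t"
        proof -
          have e1: "1 - s = (a - z) / (a - x)" unfolding s_def using xa by (simp add: field_simps)
          have e2: "y - z = (1 - t) * (y - x)" unfolding z_def by (simp add: algebra_simps)
          have "(a - z) * (y - x) \<le> (y - z) * (a - x)"
          proof -
            have "x * (y - a) \<le> z * (y - a)" using zx ya by (intro mult_right_mono) auto
            then show ?thesis by (simp add: algebra_simps)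
          qed
          then have "(a - z) / (a - x) \<le> (y - z) / (y - x)"
            using xa xy by (simp add: divide_simps)
          also have "\<dots> = 1 - t" using e2 xy by simp
          finally show ?thesis using e1 by simp
        qed
        then have "(1 - s) * P x \<le> (1 - t) * P x" using Pn x xa by (intro mult_right_mono) auto
        then show ?thesis using Pz Fy za xa unfolding F_def by auto
      qed
    qed
    then show "F ((1 - t) *\<^sub>R x + t *\<^sub>R y) \<le> (1 - t) * F x + t * F y" unfolding z_def by simp
  qed
  show ?thesis using Fn Fa Fc by auto
qed


lemma sum_good:
  fixes I :: "real set" and h :: "nat \<Rightarrow> real \<Rightarrow> real"
  assumes I: "convex I" and "finite S"
    and H: "\<forall>i\<in>S. anti_on I (h i) \<and> convex_on I (h i)"
  shows "anti_on I (\<lambda>x. \<Sum>i\<in>S. h i x) \<and> convex_on I (\<lambda>x. \<Sum>i\<in>S. h i x)"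
  using assms(2) H
proof (induction S rule: finite_induct)
  case empty
  then show ?case using I by (simp add: anti_on_def convex_on_const)
next
  case (insert j S)
  then have IH: "anti_on I (\<lambda>x. \<Sum>i\<in>S. h i x) \<and> convex_on I (\<lambda>x. \<Sum>i\<in>S. h i x)" by auto
  have hj: "anti_on I (h j) \<and> convex_on I (h j)" using insert by auto
  have eq: "\<And>x. (\<Sum>i\<in>insert j S. h i x) = h j x + (\<Sum>i\<in>S. h i x)" using insert by simp
  have c: "convex_on I (\<lambda>x. h j x + (\<Sum>i\<in>S. h i x))" using IH hj by (intro convex_on_add) auto
  have a: "anti_on I (\<lambda>x. h j x + (\<Sum>i\<in>S. h i x))"
    using IH hj unfolding anti_on_def by (auto intro!: add_mono)
  show ?case unfolding eq using c a by auto
qed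

lemma binom_step:
  assumes "Suc (t + l) \<le> n"
  shows "real (n - (t + l)) * real (n choose (t + l)) = real (Suc (t + l)) * real (n choose Suc (t + l))"
proof -
  have "(n - (t + l)) * (n choose (t + l)) = Suc (t + l) * (n choose Suc (t + l))"
    using binomial_absorb_comp[of n "t + l"] binomial_absorption[of "t + l" n] by simp
  then show ?thesis by (metis of_nat_mult)
qed

lemma ND:
  fixes n t l :: nat
  assumes "t + l \<le> n"
  shows "(\<Prod>i<l. (real n - real t - real i)) * real (n choose t)
       = (\<Prod>i<l. (real t + real l - real i)) * real (n choose (t + l))"
  using assms
proof (induction l)
  case 0
  then show ?case by simp
next
  case (Suc l)
  have IH: "(\<Prod>i<l. (real n - real t - real i)) * real (n choose t)
       = (\<Prod>i<l. (real t + real l - real i)) * real (n choose (t + l))" using Suc by simp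
  have D: "(\<Prod>i<Suc l. (real t + real (Suc l) - real i)) = (real t + real l + 1) * (\<Prod>i<l. (real t + real l - real i))"
    unfolding prod.lessThan_Suc_shift by (simp add: algebra_simps)
  have B: "real (n - (t + l)) * real (n choose (t + l)) = real (Suc (t + l)) * real (n choose Suc (t + l))"
    using binom_step[of t l n] Suc.prems by simp
  have nr: "real (n - (t + l)) = real n - real t - real l" using Suc.prems by simp
  have "(\<Prod>i<Suc l. (real n - real t - real i)) * real (n choose t)
      = (real n - real t - real l) * ((\<Prod>i<l. (real n - real t - real i)) * real (n choose t))"
    by (simp add: algebra_simps)
  also have "\<dots> = (\<Prod>i<l. (real t + real l - real i)) * (real (n - (t + l)) * real (n choose (t + l)))"
    unfolding IH nr by (simp add: algebra_simps)
  also have "\<dots> = (\<Prod>i<l. (real t + real l - real i)) * (real (Suc (t + l)) * real (n choose Suc (t + l)))"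
    unfolding B ..
  also have "\<dots> = (\<Prod>i<Suc l. (real t + real (Suc l) - real i)) * real (n choose (t + Suc l))"
    unfolding D by (simp add: algebra_simps)
  finally show ?case .
qed

lemma Qval:
  fixes n t l :: nat
  assumes "t + l \<le> n"
  shows "(\<Prod>i<l. (real n - real t - real i) / (real t + real l - real i))
       = real (n choose (t + l)) / real (n choose t)"
proof -
  have Dp: "(\<Prod>i<l. (real t + real l - real i)) > 0" by (intro prod_pos) auto
  have Cp: "real (n choose t) > 0" using assms by simp
  have "(\<Prod>i<l. (real n - real t - real i) / (real t + real l - real i))
      = (\<Prod>i<l. (real n - real t - real i)) / (\<Prod>i<l. (real t + real l - real i))"
    by (rule prod_dividef)
  also have "\<dots> = real (n choose (t + l)) / real (n choose t)"
    using ND[OF assms] Dp Cp by (simp add: field_simps)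
  finally show ?thesis .
qed

lemma flam_int:
  assumes "t \<le> \<Lambda>" "1 \<le> l"
  shows "f_lam \<Lambda> K l (real t) = real (K l) * real (\<Lambda> choose (t + l)) / real (\<Lambda> choose t)"
proof (cases "t + l \<le> \<Lambda>")
  case True
  then have "real t \<le> real \<Lambda> - real l + 1" by simp
  then show ?thesis unfolding f_lam_def using Qval[OF True] by simp
next
  case False
  then have C0: "\<Lambda> choose (t + l) = 0" by simp
  show ?thesis
  proof (cases "t + l = Suc \<Lambda>")
    case True
    have "l - 1 \<in> {..<l}" using assms by auto
    moreover have "real \<Lambda> - real t - real (l - 1) = 0" using True assms by auto
    ultimately have "(\<Prod>i<l. (real \<Lambda> - real t - real i) / (real t + real l - real i)) = 0"
      by (intro prod_zero) (auto intro!: bexI[of _ "l - 1"])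
    then show ?thesis unfolding f_lam_def C0 by simp
  next
    case False
    then have "\<not> real t \<le> real \<Lambda> - real l + 1" using \<open>\<not> t + l \<le> \<Lambda>\<close> by simp
    then show ?thesis unfolding f_lam_def C0 by simp
  qed
qed

lemma ftot_int:
  assumes "t \<le> \<Lambda>"
  shows "f_tot \<Lambda> K (real t) = seqval \<Lambda> K t"
proof -
  let ?g = "\<lambda>l. real (K l) * real (\<Lambda> choose (t + l)) / real (\<Lambda> choose t)"
  have Cp: "real (\<Lambda> choose t) > 0" using assms by simp
  have "seqval \<Lambda> K t = (\<Sum>l = 0..\<Lambda>. ?g l)"
    unfolding seqval_def
    by (rule sum.mono_neutral_left) auto
  also have "\<dots> = ?g 0 + (\<Sum>l = 1..\<Lambda>. ?g l)"
    by (simp add: sum.atLeast_Suc_atMost)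
  also have "?g 0 = real (K 0)" using Cp by simp
  also have "(\<Sum>l = 1..\<Lambda>. ?g l) = (\<Sum>l = 1..\<Lambda>. f_lam \<Lambda> K l (real t))"
    using flam_int[OF assms] by (intro sum.cong) auto
  finally show ?thesis unfolding f_tot_def by simp
qed


lemma flam_good:
  assumes l: "1 \<le> l" "l \<le> \<Lambda>"
  shows "anti_on {0..real \<Lambda>} (f_lam \<Lambda> K l) \<and> convex_on {0..real \<Lambda>} (f_lam \<Lambda> K l)"
proof -
  define a where "a = real \<Lambda> - real l + 1"
  define h where "h = (\<lambda>i x. (real \<Lambda> - x - real i) / (x + real l - real i))"
  have hg: "\<forall>i\<in>{..<l}. (\<forall>x\<in>{0..a}. 0 \<le> h i x) \<and> anti_on {0..a} (h i) \<and> convex_on {0..a} (h i)"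
  proof
    fix i assume i: "i \<in> {..<l}"
    have e: "h i = (\<lambda>x. ((real \<Lambda> - real i) - x) / (x + (real l - real i)))"
      unfolding h_def by (rule ext) (simp add: algebra_simps)
    show "(\<forall>x\<in>{0..a}. 0 \<le> h i x) \<and> anti_on {0..a} (h i) \<and> convex_on {0..a} (h i)"
      unfolding e using i l by (intro factor_good) (auto simp: a_def)
  qed
  have P0: "(\<forall>x\<in>{0..a}. 0 \<le> (\<Prod>i<l. h i x)) \<and> anti_on {0..a} (\<lambda>x. \<Prod>i<l. h i x)
     \<and> convex_on {0..a} (\<lambda>x. \<Prod>i<l. h i x)"
    by (rule prod_good[OF _ _ hg]) auto
  define P where "P = (\<lambda>x. real (K l) * (\<Prod>i<l. h i x))"
  have Pn: "\<forall>x\<in>{0..a}. 0 \<le> P x" using P0 unfolding P_def by auto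
  have Pa: "anti_on {0..a} P" using P0 unfolding P_def anti_on_def by (auto intro!: mult_left_mono)
  have Pc: "convex_on {0..a} P" using P0 unfolding P_def by (intro convex_on_cmul) auto
  have "(\<Prod>i<l. h i a) = 0"
  proof (rule prod_zero)
    show "\<exists>i\<in>{..<l}. h i a = 0" using l by (intro bexI[of _ "l - 1"]) (auto simp: h_def a_def)
  qed auto
  then have Pz: "P a = 0" unfolding P_def by simp
  have F: "f_lam \<Lambda> K l = (\<lambda>t. if t \<le> a then P t else 0)"
    unfolding f_lam_def P_def h_def a_def by (rule ext) simp
  have "0 \<le> a" "a \<le> real \<Lambda>" using l unfolding a_def by auto
  from glue[OF this Pn Pa Pc Pz] show ?thesis unfolding F by auto
qed

theorem lemma3:
  fixes \<Lambda> :: nat and K :: "nat \<Rightarrow> nat"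
  assumes "\<Lambda> \<ge> 1"
  shows "convex_on {0..real \<Lambda>} (f_tot \<Lambda> K)
    \<and> (\<forall>x\<in>{0..real \<Lambda>}. \<forall>y\<in>{0..real \<Lambda>}. x \<le> y \<longrightarrow> f_tot \<Lambda> K y \<le> f_tot \<Lambda> K x)
    \<and> (\<forall>t\<le>\<Lambda>. f_tot \<Lambda> K (real t) = seqval \<Lambda> K t)
    \<and> (\<forall>t. t + 2 \<le> \<Lambda> \<longrightarrow> 2 * seqval \<Lambda> K (t + 1) \<le> seqval \<Lambda> K t + seqval \<Lambda> K (t + 2))
    \<and> (\<forall>t. t + 1 \<le> \<Lambda> \<longrightarrow> seqval \<Lambda> K (t + 1) \<le> seqval \<Lambda> K t)"
proof -
  have S: "anti_on {0..real \<Lambda>} (\<lambda>x. \<Sum>l=1..\<Lambda>. f_lam \<Lambda> K l x)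
      \<and> convex_on {0..real \<Lambda>} (\<lambda>x. \<Sum>l=1..\<Lambda>. f_lam \<Lambda> K l x)"
    by (rule sum_good) (auto intro: flam_good[THEN conjunct1] flam_good[THEN conjunct2])
  have C: "convex_on {0..real \<Lambda>} (f_tot \<Lambda> K)"
    unfolding f_tot_def using S by (intro convex_on_add) (auto simp: convex_on_const)
  have A: "\<forall>x\<in>{0..real \<Lambda>}. \<forall>y\<in>{0..real \<Lambda>}. x \<le> y \<longrightarrow> f_tot \<Lambda> K y \<le> f_tot \<Lambda> K x"
    using S unfolding f_tot_def anti_on_def by auto
  have V: "\<forall>t\<le>\<Lambda>. f_tot \<Lambda> K (real t) = seqval \<Lambda> K t" using ftot_int by blast
  have SC: "\<forall>t. t + 2 \<le> \<Lambda> \<longrightarrow> 2 * seqval \<Lambda> K (t + 1) \<le> seqval \<Lambda> K t + seqval \<Lambda> K (t + 2)"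
  proof (intro allI impI)
    fix t assume t: "t + 2 \<le> \<Lambda>"
    have "f_tot \<Lambda> K ((1 - 1/2) *\<^sub>R real t + (1/2) *\<^sub>R real (t + 2))
        \<le> (1 - 1/2) * f_tot \<Lambda> K (real t) + (1/2) * f_tot \<Lambda> K (real (t + 2))"
      using convex_onD[OF C, of "1/2" "real t" "real (t + 2)"] t by auto
    moreover have "(1 - 1/2) *\<^sub>R real t + (1/2) *\<^sub>R real (t + 2) = real (t + 1)" by (simp add: field_simps)
    ultimately have "f_tot \<Lambda> K (real (t + 1)) \<le> (1/2) * f_tot \<Lambda> K (real t) + (1/2) * f_tot \<Lambda> K (real (t + 2))"
      by simp
    moreover have "f_tot \<Lambda> K (real (t + 1)) = seqval \<Lambda> K (t + 1)" using V[rule_format, of "t + 1"] t by linarith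
    moreover have "f_tot \<Lambda> K (real (t + 2)) = seqval \<Lambda> K (t + 2)" using V[rule_format, of "t + 2"] t by linarith
    moreover have "f_tot \<Lambda> K (real t) = seqval \<Lambda> K t" using V t by auto
    ultimately show "2 * seqval \<Lambda> K (t + 1) \<le> seqval \<Lambda> K t + seqval \<Lambda> K (t + 2)"
      by linarith
  qed
  have SA: "\<forall>t. t + 1 \<le> \<Lambda> \<longrightarrow> seqval \<Lambda> K (t + 1) \<le> seqval \<Lambda> K t"
  proof (intro allI impI)
    fix t assume t: "t + 1 \<le> \<Lambda>"
    have "f_tot \<Lambda> K (real (t + 1)) \<le> f_tot \<Lambda> K (real t)" using A t by auto
    moreover have "f_tot \<Lambda> K (real (t + 1)) = seqval \<Lambda> K (t + 1)" using V[rule_format, of "t + 1"] t by linarith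
    moreover have "f_tot \<Lambda> K (real t) = seqval \<Lambda> K t" using V t by auto
    ultimately show "seqval \<Lambda> K (t + 1) \<le> seqval \<Lambda> K t" by linarith
  qed
  show ?thesis using C A V SC SA by blast
qed

end
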